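(* For any $n\ge2$ and any tropical curve $\Gamma$, the tropical rational function semifield $\overline{\boldsymbol{T}(X_1,\ldots,X_n)}$ is not isomorphic to $\operatorname{Rat}(\Gamma)$ as a $\boldsymbol{T}$-algebra.
   Context: $\boldsymbol{T}=\mathbb{R}\cup\{-\infty\}$ with $a\oplus b=\max\{a,b\}$, $a\odot b=a+b$. $\overline{\boldsymbol{T}[X_1,\ldots,X_n]}$ is the tropical polynomial semiring modulo identifying polynomials defining the same function $\boldsymbol{T}^n\to\boldsymbol{T}$; it is cancellative and $\overline{\boldsymbol{T}(X_1,\ldots,X_n)}$ is its semifield of fractions. $\boldsymbol{T}$-algebras are semirings with a semiring homomorphism from $\boldsymbol{T}$; an isomorphism is a bijective compatible semiring homomorphism. A tropical curve is the metric space obtained from a finite connected multigraph with edge lengths in $\mathbb{R}_{>0}\cup\{\infty\}$ ($\infty$ only on leaf edges, whose leaf end becomes a point at infinity) by identifying each edge with a closed interval of that length. A rational function on $\Gamma$ is the constant $-\infty$ or a continuous piecewise affine function $\Gamma\to\mathbb{R}\cup\{\pm\infty\}$ with integer slopes and finitely many pieces, taking $\pm\infty$ only at points at infinity. $\operatorname{Rat}(\Gamma)$, with pointwise max and sum, is a $\boldsymbol{T}$-algebra via constants. *)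

theory Defs
  imports "HOL-Library.Extended_Real"
begin

(* Elements of T are the ereals different from \<infinity>;  a \<oplus> b = max a b,  a \<odot> b = a + b. *)

definition talg_iso ::
  "'a set \<Rightarrow> ('a \<Rightarrow> 'a \<Rightarrow> 'a) \<Rightarrow> ('a \<Rightarrow> 'a \<Rightarrow> 'a) \<Rightarrow> (ereal \<Rightarrow> 'a) \<Rightarrow>
   'b set \<Rightarrow> ('b \<Rightarrow> 'b \<Rightarrow> 'b) \<Rightarrow> ('b \<Rightarrow> 'b \<Rightarrow> 'b) \<Rightarrow> (ereal \<Rightarrow> 'b) \<Rightarrow>
   ('a \<Rightarrow> 'b) \<Rightarrow> bool" where
  "talg_iso A addA mulA constA B addB mulB constB \<phi> \<longleftrightarrow>
     bij_betw \<phi> A B \<and>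
     (\<forall>x\<in>A. \<forall>y\<in>A. \<phi> (addA x y) = addB (\<phi> x) (\<phi> y)) \<and>
     (\<forall>x\<in>A. \<forall>y\<in>A. \<phi> (mulA x y) = mulB (\<phi> x) (\<phi> y)) \<and>
     (\<forall>c. c \<noteq> \<infinity> \<longrightarrow> \<phi> (constA c) = constB c)"

definition Tpts :: "nat \<Rightarrow> (nat \<Rightarrow> ereal) set" where
  "Tpts n = {x. (\<forall>i<n. x i \<noteq> \<infinity>) \<and> (\<forall>i. n \<le> i \<longrightarrow> x i = 0)}"

(* monomial c \<odot> X_1^{e_1} ... X_n^{e_n} evaluated at x *)
definition mono_val :: "nat \<Rightarrow> ereal \<times> (nat \<Rightarrow> nat) \<Rightarrow> (nat \<Rightarrow> ereal) \<Rightarrow> ereal" where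
  "mono_val n m x = fst m + (\<Sum>i<n. ereal (real (snd m i)) * x i)"

definition poly_fun :: "nat \<Rightarrow> (ereal \<times> (nat \<Rightarrow> nat)) set \<Rightarrow> (nat \<Rightarrow> ereal) \<Rightarrow> ereal" where
  "poly_fun n M = (\<lambda>x. if x \<in> Tpts n then (SUP m\<in>M. mono_val n m x) else -\<infinity>)"

(* the semiring \<overline>{T[X_1..X_n]}: polynomials identified with the functions they define *)
definition TPoly :: "nat \<Rightarrow> ((nat \<Rightarrow> ereal) \<Rightarrow> ereal) set" where
  "TPoly n = {poly_fun n M | M. finite M \<and> (\<forall>m\<in>M. fst m \<noteq> \<infinity>)}"

definition fplus :: "('x \<Rightarrow> ereal) \<Rightarrow> ('x \<Rightarrow> ereal) \<Rightarrow> 'x \<Rightarrow> ereal" where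
  "fplus f g = (\<lambda>x. max (f x) (g x))"

definition ftimes :: "('x \<Rightarrow> ereal) \<Rightarrow> ('x \<Rightarrow> ereal) \<Rightarrow> 'x \<Rightarrow> ereal" where
  "ftimes f g = (\<lambda>x. f x + g x)"

definition frac_pairs :: "nat \<Rightarrow> (((nat \<Rightarrow> ereal) \<Rightarrow> ereal) \<times> ((nat \<Rightarrow> ereal) \<Rightarrow> ereal)) set" where
  "frac_pairs n = {(f, g). f \<in> TPoly n \<and> g \<in> TPoly n \<and> g \<noteq> (\<lambda>_. -\<infinity>)}"

definition frac_rel :: "nat \<Rightarrow> ((((nat \<Rightarrow> ereal) \<Rightarrow> ereal) \<times> ((nat \<Rightarrow> ereal) \<Rightarrow> ereal)) \<times>
                                (((nat \<Rightarrow> ereal) \<Rightarrow> ereal) \<times> ((nat \<Rightarrow> ereal) \<Rightarrow> ereal))) set" where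
  "frac_rel n = {(p, q). p \<in> frac_pairs n \<and> q \<in> frac_pairs n \<and>
                         ftimes (fst p) (snd q) = ftimes (fst q) (snd p)}"

definition TRat :: "nat \<Rightarrow> (((nat \<Rightarrow> ereal) \<Rightarrow> ereal) \<times> ((nat \<Rightarrow> ereal) \<Rightarrow> ereal)) set set" where
  "TRat n = frac_pairs n // frac_rel n"

definition frac_class where
  "frac_class n p = frac_rel n `` {p}"

definition frac_add where
  "frac_add n X Y = the_elem (\<Union>p\<in>X. \<Union>q\<in>Y.
     {frac_class n (fplus (ftimes (fst p) (snd q)) (ftimes (fst q) (snd p)), ftimes (snd p) (snd q))})"

definition frac_mul where
  "frac_mul n X Y = the_elem (\<Union>p\<in>X. \<Union>q\<in>Y.
     {frac_class n (ftimes (fst p) (fst q), ftimes (snd p) (snd q))})"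

definition frac_const where
  "frac_const n c = frac_class n (poly_fun n {(c, \<lambda>_. 0)}, poly_fun n {(0, \<lambda>_. 0)})"

(* A finite multigraph: vertex set V, edge set E, each edge with endpoints src e, tgt e
   (an orientation chosen only for bookkeeping; loops allowed), lengths in R_{>0} \<union> {\<infinity>}. *)
definition degree :: "'e set \<Rightarrow> ('e \<Rightarrow> 'v) \<Rightarrow> ('e \<Rightarrow> 'v) \<Rightarrow> 'v \<Rightarrow> nat" where
  "degree E src tgt v = card {e\<in>E. src e = v} + card {e\<in>E. tgt e = v}"

definition graph_connected :: "'v set \<Rightarrow> 'e set \<Rightarrow> ('e \<Rightarrow> 'v) \<Rightarrow> ('e \<Rightarrow> 'v) \<Rightarrow> bool" where
  "graph_connected V E src tgt \<longleftrightarrow>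
     (\<forall>u\<in>V. \<forall>w\<in>V. (u, w) \<in> ({(src e, tgt e) | e. e \<in> E} \<union> {(tgt e, src e) | e. e \<in> E})\<^sup>*)"

(* an edge of length \<infinity> is a leaf edge whose leaf end is tgt e (the point at infinity) *)
definition tropical_curve ::
  "'v set \<Rightarrow> 'e set \<Rightarrow> ('e \<Rightarrow> 'v) \<Rightarrow> ('e \<Rightarrow> 'v) \<Rightarrow> ('e \<Rightarrow> ereal) \<Rightarrow> bool" where
  "tropical_curve V E src tgt len \<longleftrightarrow>
     finite V \<and> V \<noteq> {} \<and> finite E \<and>
     (\<forall>e\<in>E. src e \<in> V \<and> tgt e \<in> V \<and> 0 < len e) \<and>
     (\<forall>e\<in>E. len e = \<infinity> \<longrightarrow> degree E src tgt (tgt e) = 1) \<and>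
     graph_connected V E src tgt"

definition inf_pts :: "'e set \<Rightarrow> ('e \<Rightarrow> 'v) \<Rightarrow> ('e \<Rightarrow> ereal) \<Rightarrow> 'v set" where
  "inf_pts E tgt len = {tgt e | e. e \<in> E \<and> len e = \<infinity>}"

(* points of \<Gamma> other than the points at infinity: vertices (not at infinity) and
   interior points (e,t), 0 < t < len e, of edges *)
definition curve_pts ::
  "'v set \<Rightarrow> 'e set \<Rightarrow> ('e \<Rightarrow> 'v) \<Rightarrow> ('e \<Rightarrow> ereal) \<Rightarrow> ('v + 'e \<times> real) set" where
  "curve_pts V E tgt len =
     Inl ` (V - inf_pts E tgt len) \<union> {Inr (e, t) | e t. e \<in> E \<and> 0 < t \<and> ereal t < len e}"

(* restriction of a function on \<Gamma> to edge e, parametrised by arc length t from src e *)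
definition edge_fun ::
  "('e \<Rightarrow> 'v) \<Rightarrow> ('e \<Rightarrow> 'v) \<Rightarrow> ('e \<Rightarrow> ereal) \<Rightarrow> ('v + 'e \<times> real \<Rightarrow> ereal) \<Rightarrow> 'e \<Rightarrow> real \<Rightarrow> ereal" where
  "edge_fun src tgt len F e t =
     (if t = 0 then F (Inl (src e)) else if ereal t = len e then F (Inl (tgt e)) else F (Inr (e, t)))"

definition piecewise_affine_int :: "ereal \<Rightarrow> (real \<Rightarrow> ereal) \<Rightarrow> bool" where
  "piecewise_affine_int L g \<longleftrightarrow>
     (L \<noteq> \<infinity> \<longrightarrow> (\<exists>(k::nat) (a::nat \<Rightarrow> real) (m::nat \<Rightarrow> int) (b::nat \<Rightarrow> real).
        a 0 = 0 \<and> ereal (a k) = L \<and> (\<forall>i<k. a i < a (Suc i)) \<and>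
        (\<forall>i<k. \<forall>t. a i \<le> t \<and> t \<le> a (Suc i) \<longrightarrow> g t = ereal (real_of_int (m i) * t + b i)))) \<and>
     (L = \<infinity> \<longrightarrow> (\<exists>(k::nat) (a::nat \<Rightarrow> real) (m::nat \<Rightarrow> int) (b::nat \<Rightarrow> real).
        a 0 = 0 \<and> (\<forall>i<k. a i < a (Suc i)) \<and>
        (\<forall>i<k. \<forall>t. a i \<le> t \<and> t \<le> a (Suc i) \<longrightarrow> g t = ereal (real_of_int (m i) * t + b i)) \<and>
        (\<forall>t. a k \<le> t \<longrightarrow> g t = ereal (real_of_int (m k) * t + b k))))"

(* Rat(\<Gamma>): a rational function is recorded by its values on the points of \<Gamma> that are not
   at infinity (its values at points at infinity are the limits, hence determined);
   outside \<Gamma> the value is fixed to -\<infinity>. *)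
definition RatG ::
  "'v set \<Rightarrow> 'e set \<Rightarrow> ('e \<Rightarrow> 'v) \<Rightarrow> ('e \<Rightarrow> 'v) \<Rightarrow> ('e \<Rightarrow> ereal) \<Rightarrow> ('v + 'e \<times> real \<Rightarrow> ereal) set" where
  "RatG V E src tgt len =
     {F. (\<forall>p. p \<notin> curve_pts V E tgt len \<longrightarrow> F p = -\<infinity>) \<and>
         ((\<forall>p\<in>curve_pts V E tgt len. F p = -\<infinity>) \<or>
          ((\<forall>p\<in>curve_pts V E tgt len. F p \<noteq> \<infinity> \<and> F p \<noteq> -\<infinity>) \<and>
           (\<forall>e\<in>E. piecewise_affine_int (len e) (edge_fun src tgt len F e))))}"

definition rat_const ::
  "'v set \<Rightarrow> 'e set \<Rightarrow> ('e \<Rightarrow> 'v) \<Rightarrow> ('e \<Rightarrow> ereal) \<Rightarrow> ereal \<Rightarrow> ('v + 'e \<times> real \<Rightarrow> ereal)" where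
  "rat_const V E tgt len c = (\<lambda>p. if p \<in> curve_pts V E tgt len then c else -\<infinity>)"

end

theory Submission
  imports Defs "HOL-Analysis.Extended_Real_Limits"
begin

lemma max_add_ereal: "max (a::ereal) b + c = max (a + c) (b + c)"
proof (cases "a \<le> b")
  case True
  then have "a + c \<le> b + c" by (rule add_right_mono)
  then show ?thesis using True by (simp add: max_def)
next
  case False
  then have "b \<le> a" by simp
  then have "b + c \<le> a + c" by (rule add_right_mono)
  then show ?thesis using False by (auto simp: max_def)
qed

lemma sum_fin_ereal:
  fixes f :: "'a \<Rightarrow> ereal"
  assumes "\<forall>i\<in>A. f i \<noteq> -\<infinity> \<and> f i \<noteq> \<infinity>"
  shows "sum f A \<noteq> -\<infinity> \<and> sum f A \<noteq> \<infinity>"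
  using assms
proof (induction A rule: infinite_finite_induct)
  case (insert x F)
  then show ?case by (cases "f x"; cases "sum f F") auto
qed auto

lemma add_max_ereal: "c + max (a::ereal) b = max (c + a) (c + b)"
  using max_add_ereal[of a b c] by (simp add: add.commute)

lemma mono_val_ninf:
  assumes "x \<in> Tpts n" "fst m \<noteq> \<infinity>"
  shows "mono_val n m x \<noteq> \<infinity>"
proof -
  have "\<forall>i<n. ereal (real (snd m i)) * x i \<noteq> \<infinity>"
  proof (intro allI impI)
    fix i assume "i < n"
    then have "x i \<noteq> \<infinity>" using assms(1) by (auto simp: Tpts_def)
    then show "ereal (real (snd m i)) * x i \<noteq> \<infinity>"
      by (cases "x i") auto
  qed
  then have "(\<Sum>i<n. ereal (real (snd m i)) * x i) \<noteq> \<infinity>"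
    by (simp add: sum_Pinfty)
  then show ?thesis using assms(2) unfolding mono_val_def by simp
qed

lemma poly_fun_ninf:
  assumes "finite M" "\<forall>m\<in>M. fst m \<noteq> \<infinity>"
  shows "poly_fun n M x \<noteq> \<infinity>"
proof (cases "x \<in> Tpts n")
  case True
  have "(SUP m\<in>M. mono_val n m x) \<noteq> \<infinity>" using assms
  proof (induction M rule: finite_induct)
    case empty then show ?case by (simp add: bot_ereal_def)
  next
    case (insert a F)
    then show ?case using mono_val_ninf[OF True] by (simp add: max_def)
  qed
  then show ?thesis using True by (simp add: poly_fun_def)
qed (simp add: poly_fun_def)

lemma TPoly_ninf: "f \<in> TPoly n \<Longrightarrow> f x \<noteq> \<infinity>"
  unfolding TPoly_def using poly_fun_ninf by blast

lemma TPoly_off: "f \<in> TPoly n \<Longrightarrow> x \<notin> Tpts n \<Longrightarrow> f x = -\<infinity>"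
  unfolding TPoly_def poly_fun_def by auto

definition finpt :: "nat \<Rightarrow> (nat \<Rightarrow> ereal) \<Rightarrow> bool" where
  "finpt n x \<longleftrightarrow> x \<in> Tpts n \<and> (\<forall>i<n. x i \<noteq> -\<infinity>)"

lemma mono_val_fin:
  assumes "finpt n x" "fst m \<noteq> \<infinity>" "fst m \<noteq> -\<infinity>"
  shows "mono_val n m x \<noteq> -\<infinity>"
proof -
  have "\<forall>i<n. ereal (real (snd m i)) * x i \<noteq> -\<infinity>"
  proof (intro allI impI)
    fix i assume "i < n"
    then have "x i \<noteq> \<infinity>" "x i \<noteq> -\<infinity>" using assms(1) by (auto simp: Tpts_def finpt_def)
    then show "ereal (real (snd m i)) * x i \<noteq> -\<infinity>"
      by (cases "x i") auto
  qed
  moreover have "\<forall>i<n. ereal (real (snd m i)) * x i \<noteq> \<infinity>"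
    using assms(1) by (auto simp: Tpts_def finpt_def)
  ultimately have "(\<Sum>i<n. ereal (real (snd m i)) * x i) \<noteq> -\<infinity>"
    using sum_fin_ereal[of "{..<n}" "\<lambda>i. ereal (real (snd m i)) * x i"] by auto
  then show ?thesis using assms(2,3) unfolding mono_val_def by (cases "fst m") auto
qed

lemma mono_val_minf: "fst m = -\<infinity> \<Longrightarrow> x \<in> Tpts n \<Longrightarrow> mono_val n m x = -\<infinity>"
  using mono_val_ninf[of x n "(0, snd m)"]
  unfolding mono_val_def by simp

lemma TPoly_fin:
  assumes "f \<in> TPoly n" "f \<noteq> (\<lambda>_. -\<infinity>)" "finpt n x"
  shows "f x \<noteq> -\<infinity>"
proof -
  obtain M where M: "f = poly_fun n M" "finite M" "\<forall>m\<in>M. fst m \<noteq> \<infinity>"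
    using assms(1) unfolding TPoly_def by blast
  have "\<exists>m\<in>M. fst m \<noteq> -\<infinity>"
  proof (rule ccontr)
    assume "\<not> ?thesis"
    then have "\<forall>y. f y = -\<infinity>"
      using M mono_val_minf by (auto simp: poly_fun_def intro!: antisym SUP_least)
    then show False using assms(2) by auto
  qed
  then obtain m where m: "m \<in> M" "fst m \<noteq> -\<infinity>" by blast
  have xT: "x \<in> Tpts n" using assms(3) by (simp add: finpt_def)
  have "mono_val n m x \<le> (SUP m\<in>M. mono_val n m x)" using m by (intro SUP_upper) 
  moreover have "mono_val n m x \<noteq> -\<infinity>" using mono_val_fin[OF assms(3)] m M by auto
  ultimately show ?thesis using M xT by (auto simp: poly_fun_def)
qed

lemma SUP_attained_ereal:
  fixes f :: "'a \<Rightarrow> ereal"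
  assumes "finite A" "A \<noteq> {}"
  shows "\<exists>a\<in>A. (SUP x\<in>A. f x) = f a"
  using assms
proof (induction A rule: finite_ne_induct)
  case (singleton x) then show ?case by simp
next
  case (insert x F)
  then obtain a where a: "a \<in> F" "(SUP x\<in>F. f x) = f a" by blast
  show ?case
  proof (cases "f x \<le> f a")
    case True then show ?thesis using a by (auto simp: sup_max max_def)
  next
    case False then show ?thesis using a by (auto simp: sup_max max_def)
  qed
qed

lemma SUP_plus_ereal:
  fixes f g :: "'a \<Rightarrow> ereal"
  assumes "finite A" "finite B" "\<forall>a\<in>A. f a \<noteq> \<infinity>" "\<forall>b\<in>B. g b \<noteq> \<infinity>"
  shows "(SUP a\<in>A. f a) + (SUP b\<in>B. g b) = (SUP p\<in>A \<times> B. f (fst p) + g (snd p))"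
proof (cases "A = {} \<or> B = {}")
  case True
  have fA: "(SUP a\<in>A. f a) \<noteq> \<infinity>"
  proof (cases "A = {}")
    case False
    then obtain a where "a \<in> A" "(SUP a\<in>A. f a) = f a" using SUP_attained_ereal assms(1) by blast
    then show ?thesis using assms(3) by auto
  qed (simp add: bot_ereal_def)
  have gB: "(SUP b\<in>B. g b) \<noteq> \<infinity>"
  proof (cases "B = {}")
    case False
    then obtain b where "b \<in> B" "(SUP b\<in>B. g b) = g b" using SUP_attained_ereal assms(2) by blast
    then show ?thesis using assms(4) by auto
  qed (simp add: bot_ereal_def)
  show ?thesis using True fA gB by (auto simp: bot_ereal_def)
next
  case False
  then obtain a b where ab: "a \<in> A" "(SUP a\<in>A. f a) = f a" "b \<in> B" "(SUP b\<in>B. g b) = g b"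
    using SUP_attained_ereal assms(1,2) by metis
  show ?thesis
  proof (rule antisym)
    show "(SUP a\<in>A. f a) + (SUP b\<in>B. g b) \<le> (SUP p\<in>A \<times> B. f (fst p) + g (snd p))"
      using ab by (intro SUP_upper2[of "(a,b)"]) auto
    show "(SUP p\<in>A \<times> B. f (fst p) + g (snd p)) \<le> (SUP a\<in>A. f a) + (SUP b\<in>B. g b)"
      by (intro SUP_least add_mono SUP_upper) auto
  qed
qed

definition mmul :: "ereal \<times> (nat \<Rightarrow> nat) \<Rightarrow> ereal \<times> (nat \<Rightarrow> nat) \<Rightarrow> ereal \<times> (nat \<Rightarrow> nat)" where
  "mmul m m' = (fst m + fst m', \<lambda>i. snd m i + snd m' i)"

lemma term_mult:
  assumes "(y::ereal) \<noteq> \<infinity>"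
  shows "ereal (real (e + e')) * y = ereal (real e) * y + ereal (real e') * y"
proof (cases y)
  case (real r) then show ?thesis by (simp add: distrib_right)
next
  case MInf then show ?thesis by (cases "e = 0"; cases "e' = 0") auto
qed (use assms in auto)

lemma mono_val_mmul:
  assumes "x \<in> Tpts n"
  shows "mono_val n (mmul m m') x = mono_val n m x + mono_val n m' x"
proof -
  have "(\<Sum>i<n. ereal (real (snd m i + snd m' i)) * x i)
      = (\<Sum>i<n. ereal (real (snd m i)) * x i) + (\<Sum>i<n. ereal (real (snd m' i)) * x i)"
    unfolding sum.distrib[symmetric]
    using assms by (intro sum.cong refl term_mult) (auto simp: Tpts_def)
  then show ?thesis unfolding mono_val_def mmul_def by (simp add: ac_simps)
qed

lemma TPoly_fplus:
  assumes "f \<in> TPoly n" "g \<in> TPoly n"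
  shows "fplus f g \<in> TPoly n"
proof -
  obtain M where M: "f = poly_fun n M" "finite M" "\<forall>m\<in>M. fst m \<noteq> \<infinity>"
    using assms(1) unfolding TPoly_def by blast
  obtain M' where M': "g = poly_fun n M'" "finite M'" "\<forall>m\<in>M'. fst m \<noteq> \<infinity>"
    using assms(2) unfolding TPoly_def by blast
  have "fplus f g = poly_fun n (M \<union> M')"
    unfolding M M' fplus_def poly_fun_def by (auto simp: SUP_union sup_max)
  then show ?thesis using M M' unfolding TPoly_def by auto
qed

lemma TPoly_ftimes:
  assumes "f \<in> TPoly n" "g \<in> TPoly n"
  shows "ftimes f g \<in> TPoly n"
proof -
  obtain M where M: "f = poly_fun n M" "finite M" "\<forall>m\<in>M. fst m \<noteq> \<infinity>"
    using assms(1) unfolding TPoly_def by blast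
  obtain M' where M': "g = poly_fun n M'" "finite M'" "\<forall>m\<in>M'. fst m \<noteq> \<infinity>"
    using assms(2) unfolding TPoly_def by blast
  have "ftimes f g = poly_fun n ((\<lambda>p. mmul (fst p) (snd p)) ` (M \<times> M'))"
  proof
    fix x show "ftimes f g x = poly_fun n ((\<lambda>p. mmul (fst p) (snd p)) ` (M \<times> M')) x"
    proof (cases "x \<in> Tpts n")
      case True
      have "(SUP m\<in>M. mono_val n m x) + (SUP m\<in>M'. mono_val n m x)
          = (SUP p\<in>M \<times> M'. mono_val n (fst p) x + mono_val n (snd p) x)"
        using M M' mono_val_ninf[OF True] by (intro SUP_plus_ereal) auto
      also have "\<dots> = (SUP q\<in>(\<lambda>p. mmul (fst p) (snd p)) ` (M \<times> M'). mono_val n q x)"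
        unfolding image_image using mono_val_mmul[OF True] by simp
      finally show ?thesis using True unfolding M M' ftimes_def poly_fun_def by simp
    qed (simp add: M M' ftimes_def poly_fun_def)
  qed
  moreover have "finite ((\<lambda>p. mmul (fst p) (snd p)) ` (M \<times> M'))" using M M' by simp
  moreover have "\<forall>m\<in>(\<lambda>p. mmul (fst p) (snd p)) ` (M \<times> M'). fst m \<noteq> \<infinity>"
    using M M' by (auto simp: mmul_def)
  ultimately show ?thesis unfolding TPoly_def by blast
qed

definition xt :: "(nat \<Rightarrow> ereal) \<Rightarrow> real \<Rightarrow> nat \<Rightarrow> ereal" where
  "xt x t = (\<lambda>i. if x i = -\<infinity> then ereal (-t) else x i)"

lemma xt_finpt: "x \<in> Tpts n \<Longrightarrow> finpt n (xt x t)"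
  by (auto simp: xt_def finpt_def Tpts_def)

lemma term_lim:
  assumes "y \<noteq> \<infinity>"
  shows "((\<lambda>t. ereal (real e) * (if y = -\<infinity> then ereal (-t) else y)) \<longlongrightarrow> ereal (real e) * y) at_top"
proof (cases "y = -\<infinity> \<and> e \<noteq> 0")
  case True
  have "((\<lambda>t. ereal (real e) * ereal (-t)) \<longlongrightarrow> -\<infinity>) at_top"
    unfolding tendsto_MInfty
  proof
    fix r
    show "\<forall>\<^sub>F t in at_top. ereal (real e) * ereal (- t) < ereal r"
      unfolding eventually_at_top_linorder
    proof (intro exI allI impI)
      fix t assume t: "\<bar>r\<bar> + 1 \<le> t"
      have "real e \<ge> 1" using True by simp
      then have "real e * t \<ge> 1 * t" using t by (intro mult_right_mono) auto
      then show "ereal (real e) * ereal (- t) < ereal r" using t by simp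
    qed
  qed
  then show ?thesis using True by simp
next
  case False
  then show ?thesis by (cases "y = -\<infinity>") (auto simp: zero_ereal_def[symmetric])
qed

lemma sum_lim_ereal:
  fixes f :: "'i \<Rightarrow> real \<Rightarrow> ereal"
  assumes "finite A" "\<forall>i\<in>A. (f i \<longlongrightarrow> L i) at_top \<and> L i \<noteq> \<infinity>"
  shows "((\<lambda>t. \<Sum>i\<in>A. f i t) \<longlongrightarrow> (\<Sum>i\<in>A. L i)) at_top \<and> (\<Sum>i\<in>A. L i) \<noteq> \<infinity>"
  using assms
proof (induction A rule: finite_induct)
  case (insert x F)
  then have IH: "((\<lambda>t. \<Sum>i\<in>F. f i t) \<longlongrightarrow> (\<Sum>i\<in>F. L i)) at_top" "(\<Sum>i\<in>F. L i) \<noteq> \<infinity>"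
    and fx: "(f x \<longlongrightarrow> L x) at_top" "L x \<noteq> \<infinity>" by auto
  have "((\<lambda>t. f x t + (\<Sum>i\<in>F. f i t)) \<longlongrightarrow> L x + (\<Sum>i\<in>F. L i)) at_top"
    using IH fx by (intro tendsto_add_ereal_general) auto
  moreover have "L x + (\<Sum>i\<in>F. L i) \<noteq> \<infinity>" using IH fx by simp
  ultimately show ?case using insert.hyps by simp
qed simp

lemma mono_lim:
  assumes "x \<in> Tpts n" "fst m \<noteq> \<infinity>"
  shows "((\<lambda>t. mono_val n m (xt x t)) \<longlongrightarrow> mono_val n m x) at_top"
proof -
  have "\<forall>i\<in>{..<n}. ((\<lambda>t. ereal (real (snd m i)) * xt x t i) \<longlongrightarrow> ereal (real (snd m i)) * x i) at_top
          \<and> ereal (real (snd m i)) * x i \<noteq> \<infinity>"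
  proof
    fix i assume "i \<in> {..<n}"
    then have xi: "x i \<noteq> \<infinity>" using assms(1) by (auto simp: Tpts_def)
    show "((\<lambda>t. ereal (real (snd m i)) * xt x t i) \<longlongrightarrow> ereal (real (snd m i)) * x i) at_top
          \<and> ereal (real (snd m i)) * x i \<noteq> \<infinity>"
      using term_lim[OF xi, of "snd m i"] xi by (cases "x i") (auto simp: xt_def)
  qed
  from sum_lim_ereal[OF _ this] have S:
    "((\<lambda>t. \<Sum>i<n. ereal (real (snd m i)) * xt x t i) \<longlongrightarrow> (\<Sum>i<n. ereal (real (snd m i)) * x i)) at_top"
    "(\<Sum>i<n. ereal (real (snd m i)) * x i) \<noteq> \<infinity>" by auto
  have "((\<lambda>t. fst m + (\<Sum>i<n. ereal (real (snd m i)) * xt x t i)) \<longlongrightarrow>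
          fst m + (\<Sum>i<n. ereal (real (snd m i)) * x i)) at_top"
    using S assms(2) by (intro tendsto_add_ereal_general) auto
  then show ?thesis unfolding mono_val_def .
qed

lemma poly_lim:
  assumes "f \<in> TPoly n" "x \<in> Tpts n"
  shows "((\<lambda>t. f (xt x t)) \<longlongrightarrow> f x) at_top"
proof -
  obtain M where M: "f = poly_fun n M" "finite M" "\<forall>m\<in>M. fst m \<noteq> \<infinity>"
    using assms(1) unfolding TPoly_def by blast
  have xtT: "\<And>t. xt x t \<in> Tpts n" using xt_finpt[OF assms(2)] by (simp add: finpt_def)
  have "((\<lambda>t. SUP m\<in>M. mono_val n m (xt x t)) \<longlongrightarrow> (SUP m\<in>M. mono_val n m x)) at_top"
    using M(2,3)
  proof (induction M rule: finite_induct)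
    case empty then show ?case by simp
  next
    case (insert a F)
    then show ?case using mono_lim[OF assms(2)] by (simp add: sup_max tendsto_max)
  qed
  then show ?thesis using xtT assms(2) unfolding M poly_fun_def by simp
qed

lemma poly_eq_fin:
  assumes "f \<in> TPoly n" "g \<in> TPoly n" "\<And>y. finpt n y \<Longrightarrow> f y = g y"
  shows "f = g"
proof
  fix x show "f x = g x"
  proof (cases "x \<in> Tpts n")
    case True
    have "((\<lambda>t. f (xt x t)) \<longlongrightarrow> f x) at_top" by (rule poly_lim[OF assms(1) True])
    moreover have "((\<lambda>t. f (xt x t)) \<longlongrightarrow> g x) at_top"
      using poly_lim[OF assms(2) True] assms(3)[OF xt_finpt[OF True]] by simp
    ultimately show ?thesis by (rule tendsto_unique[rotated]) simp
  qed (simp add: TPoly_off[OF assms(1)] TPoly_off[OF assms(2)])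
qed

lemma fp_iff: "p \<in> frac_pairs n \<longleftrightarrow> fst p \<in> TPoly n \<and> snd p \<in> TPoly n \<and> snd p \<noteq> (\<lambda>_. -\<infinity>)"
  by (cases p) (auto simp: frac_pairs_def)

lemma rel_iff: "(p, q) \<in> frac_rel n \<longleftrightarrow> p \<in> frac_pairs n \<and> q \<in> frac_pairs n \<and>
   ftimes (fst p) (snd q) = ftimes (fst q) (snd p)"
  by (simp add: frac_rel_def)

lemma finpt0: "finpt n (\<lambda>_. 0)"
  by (simp add: finpt_def Tpts_def)

lemma denom_prod_nz:
  assumes "f \<in> TPoly n" "g \<in> TPoly n" "f \<noteq> (\<lambda>_. -\<infinity>)" "g \<noteq> (\<lambda>_. -\<infinity>)"
  shows "ftimes f g \<noteq> (\<lambda>_. -\<infinity>)"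
proof
  assume "ftimes f g = (\<lambda>_. -\<infinity>)"
  then have "f (\<lambda>_. 0) + g (\<lambda>_. 0) = -\<infinity>" unfolding ftimes_def by meson
  moreover have "f (\<lambda>_. 0) \<noteq> -\<infinity>" "g (\<lambda>_. 0) \<noteq> -\<infinity>"
    using TPoly_fin[OF _ _ finpt0] assms by auto
  moreover have "f (\<lambda>_. 0) \<noteq> \<infinity>" "g (\<lambda>_. 0) \<noteq> \<infinity>" using TPoly_ninf assms by auto
  ultimately show False by (cases "f (\<lambda>_. 0)"; cases "g (\<lambda>_. 0)") auto
qed

lemma ereal_cancel_fin: "u + ereal r = v + ereal r \<Longrightarrow> (u::ereal) = v"
  by (cases u; cases v) auto

lemma rel_trans:
  assumes "(a, b) \<in> frac_rel n" "(b, c) \<in> frac_rel n"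
  shows "(a, c) \<in> frac_rel n"
proof -
  have A: "a \<in> frac_pairs n" "b \<in> frac_pairs n" "c \<in> frac_pairs n"
   and e1: "ftimes (fst a) (snd b) = ftimes (fst b) (snd a)"
   and e2: "ftimes (fst b) (snd c) = ftimes (fst c) (snd b)"
    using assms by (auto simp: rel_iff)
  have "ftimes (fst a) (snd c) = ftimes (fst c) (snd a)"
  proof (rule poly_eq_fin)
    show "ftimes (fst a) (snd c) \<in> TPoly n" "ftimes (fst c) (snd a) \<in> TPoly n"
      using A by (auto simp: fp_iff intro: TPoly_ftimes)
    fix y assume y: "finpt n y"
    have b2: "snd b y \<noteq> -\<infinity>" "snd b y \<noteq> \<infinity>"
      using A TPoly_fin[OF _ _ y] TPoly_ninf by (auto simp: fp_iff)
    have x1: "fst a y + snd b y = fst b y + snd a y"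
      using fun_cong[OF e1, of y] by (simp add: ftimes_def)
    have x2: "fst b y + snd c y = fst c y + snd b y"
      using fun_cong[OF e2, of y] by (simp add: ftimes_def)
    have "(fst a y + snd c y) + snd b y = (fst a y + snd b y) + snd c y" by (simp add: ac_simps)
    also have "\<dots> = snd a y + (fst b y + snd c y)" using x1 by (simp add: ac_simps)
    also have "\<dots> = (fst c y + snd a y) + snd b y" using x2 by (simp add: ac_simps)
    finally have "(fst a y + snd c y) + snd b y = (fst c y + snd a y) + snd b y" .
    then have "fst a y + snd c y = fst c y + snd a y"
      using b2 ereal_cancel_fin by (cases "snd b y") auto
    then show "ftimes (fst a) (snd c) y = ftimes (fst c) (snd a) y" by (simp add: ftimes_def)
  qed
  then show ?thesis using A by (simp add: rel_iff)
qed

lemma frac_equiv: "equiv (frac_pairs n) (frac_rel n)"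
proof (rule equivI)
  show "refl_on (frac_pairs n) (frac_rel n)"
    unfolding refl_on_def frac_rel_def by auto
  show "sym (frac_rel n)" by (rule symI) (auto simp: frac_rel_def)
  show "trans (frac_rel n)" by (rule transI) (rule rel_trans)
  show "frac_rel n \<subseteq> frac_pairs n \<times> frac_pairs n" by (auto simp: frac_rel_def)
qed

lemma class_eq_iff:
  assumes "p \<in> frac_pairs n" "q \<in> frac_pairs n"
  shows "frac_class n p = frac_class n q \<longleftrightarrow> ftimes (fst p) (snd q) = ftimes (fst q) (snd p)"
  using equiv_class_eq_iff[OF frac_equiv, of p q n] assms
  by (auto simp: frac_class_def rel_iff)

lemma class_in_TRat: "p \<in> frac_pairs n \<Longrightarrow> frac_class n p \<in> TRat n"
  unfolding TRat_def frac_class_def by (rule quotientI)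

definition padd where
  "padd p q = (fplus (ftimes (fst p) (snd q)) (ftimes (fst q) (snd p)), ftimes (snd p) (snd q))"

definition pmul where
  "pmul p q = (ftimes (fst p) (fst q), ftimes (snd p) (snd q))"

lemma padd_fp: "p \<in> frac_pairs n \<Longrightarrow> q \<in> frac_pairs n \<Longrightarrow> padd p q \<in> frac_pairs n"
  using denom_prod_nz[of "snd p" n "snd q"] by (auto simp: fp_iff padd_def intro!: TPoly_fplus TPoly_ftimes denom_prod_nz)

lemma pmul_fp: "p \<in> frac_pairs n \<Longrightarrow> q \<in> frac_pairs n \<Longrightarrow> pmul p q \<in> frac_pairs n"
  using denom_prod_nz[of "snd p" n "snd q"] by (auto simp: fp_iff pmul_def intro!: TPoly_fplus TPoly_ftimes denom_prod_nz)

lemma padd_compat: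
  assumes "(p, p') \<in> frac_rel n" "(q, q') \<in> frac_rel n"
  shows "(padd p q, padd p' q') \<in> frac_rel n"
proof -
  have A: "p \<in> frac_pairs n" "p' \<in> frac_pairs n" "q \<in> frac_pairs n" "q' \<in> frac_pairs n"
   and e1: "ftimes (fst p) (snd p') = ftimes (fst p') (snd p)"
   and e2: "ftimes (fst q) (snd q') = ftimes (fst q') (snd q)"
    using assms by (auto simp: rel_iff)
  have "ftimes (fst (padd p q)) (snd (padd p' q')) = ftimes (fst (padd p' q')) (snd (padd p q))"
  proof
    fix y
    have x1: "fst p y + snd p' y = fst p' y + snd p y"
      using fun_cong[OF e1, of y] by (simp add: ftimes_def)
    have x2: "fst q y + snd q' y = fst q' y + snd q y"
      using fun_cong[OF e2, of y] by (simp add: ftimes_def)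
    have "max (fst p y + snd q y) (fst q y + snd p y) + (snd p' y + snd q' y)
        = max ((fst p y + snd p' y) + (snd q y + snd q' y)) ((fst q y + snd q' y) + (snd p y + snd p' y))"
      by (simp only: max_add_ereal) (simp add: ac_simps)
    also have "\<dots> = max ((fst p' y + snd p y) + (snd q y + snd q' y)) ((fst q' y + snd q y) + (snd p y + snd p' y))"
      using x1 x2 by simp
    also have "\<dots> = max (fst p' y + snd q' y) (fst q' y + snd p' y) + (snd p y + snd q y)"
      by (simp only: max_add_ereal) (simp add: ac_simps)
    finally show "ftimes (fst (padd p q)) (snd (padd p' q')) y = ftimes (fst (padd p' q')) (snd (padd p q)) y"
      by (simp add: padd_def ftimes_def fplus_def)
  qed
  then show ?thesis using A padd_fp by (simp add: rel_iff)
qed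

lemma pmul_compat:
  assumes "(p, p') \<in> frac_rel n" "(q, q') \<in> frac_rel n"
  shows "(pmul p q, pmul p' q') \<in> frac_rel n"
proof -
  have A: "p \<in> frac_pairs n" "p' \<in> frac_pairs n" "q \<in> frac_pairs n" "q' \<in> frac_pairs n"
   and e1: "ftimes (fst p) (snd p') = ftimes (fst p') (snd p)"
   and e2: "ftimes (fst q) (snd q') = ftimes (fst q') (snd q)"
    using assms by (auto simp: rel_iff)
  have "ftimes (fst (pmul p q)) (snd (pmul p' q')) = ftimes (fst (pmul p' q')) (snd (pmul p q))"
  proof
    fix y
    have x1: "fst p y + snd p' y = fst p' y + snd p y"
      using fun_cong[OF e1, of y] by (simp add: ftimes_def)
    have x2: "fst q y + snd q' y = fst q' y + snd q y"
      using fun_cong[OF e2, of y] by (simp add: ftimes_def)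
    have "(fst p y + fst q y) + (snd p' y + snd q' y) = (fst p y + snd p' y) + (fst q y + snd q' y)"
      by (simp add: ac_simps)
    also have "\<dots> = (fst p' y + snd p y) + (fst q' y + snd q y)" using x1 x2 by simp
    also have "\<dots> = (fst p' y + fst q' y) + (snd p y + snd q y)" by (simp add: ac_simps)
    finally show "ftimes (fst (pmul p q)) (snd (pmul p' q')) y = ftimes (fst (pmul p' q')) (snd (pmul p q)) y"
      by (simp add: pmul_def ftimes_def)
  qed
  then show ?thesis using A pmul_fp by (simp add: rel_iff)
qed

lemma frac_add_class:
  assumes "p \<in> frac_pairs n" "q \<in> frac_pairs n"
  shows "frac_add n (frac_class n p) (frac_class n q) = frac_class n (padd p q)"
proof -
  have "(\<Union>p'\<in>frac_class n p. \<Union>q'\<in>frac_class n q. {frac_class n (padd p' q')}) = {frac_class n (padd p q)}"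
  proof -
    have pp: "p \<in> frac_class n p" "q \<in> frac_class n q"
      using assms by (auto simp: frac_class_def frac_rel_def)
    have "frac_class n (padd p' q') = frac_class n (padd p q)"
      if "p' \<in> frac_class n p" "q' \<in> frac_class n q" for p' q'
    proof -
      have "(padd p q, padd p' q') \<in> frac_rel n"
        using that by (intro padd_compat) (auto simp: frac_class_def)
      then show ?thesis using equiv_class_eq_iff[OF frac_equiv] by (metis frac_class_def)
    qed
    then show ?thesis using pp by blast
  qed
  then show ?thesis unfolding frac_add_def padd_def by simp
qed

lemma frac_mul_class:
  assumes "p \<in> frac_pairs n" "q \<in> frac_pairs n"
  shows "frac_mul n (frac_class n p) (frac_class n q) = frac_class n (pmul p q)"
proof -
  have "(\<Union>p'\<in>frac_class n p. \<Union>q'\<in>frac_class n q. {frac_class n (pmul p' q')}) = {frac_class n (pmul p q)}"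
  proof -
    have pp: "p \<in> frac_class n p" "q \<in> frac_class n q"
      using assms by (auto simp: frac_class_def frac_rel_def)
    have "frac_class n (pmul p' q') = frac_class n (pmul p q)"
      if "p' \<in> frac_class n p" "q' \<in> frac_class n q" for p' q'
    proof -
      have "(pmul p q, pmul p' q') \<in> frac_rel n"
        using that by (intro pmul_compat) (auto simp: frac_class_def)
      then show ?thesis using equiv_class_eq_iff[OF frac_equiv] by (metis frac_class_def)
    qed
    then show ?thesis using pp by blast
  qed
  then show ?thesis unfolding frac_mul_def pmul_def by simp
qed

definition ex :: "nat \<Rightarrow> nat \<Rightarrow> nat \<Rightarrow> nat" where
  "ex a b = (\<lambda>i. if i = 0 then a else if i = 1 then b else 0)"

lemma ereal_zero_times[simp]: "ereal (real 0) * y = 0"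
  by (simp add: zero_ereal_def[symmetric])

lemma ereal_zero_times'[simp]: "ereal 0 * y = 0"
  by (simp add: zero_ereal_def[symmetric])

lemma mv_ex:
  assumes "2 \<le> n"
  shows "mono_val n (c, ex a b) x = c + (ereal (real a) * x 0 + ereal (real b) * x 1)"
proof -
  have "(\<Sum>i<n. ereal (real (ex a b i)) * x i) = (\<Sum>i\<in>{0,1}. ereal (real (ex a b i)) * x i)"
    using assms by (intro sum.mono_neutral_right) (auto simp: ex_def)
  then show ?thesis unfolding mono_val_def by (simp add: ex_def)
qed

lemma mv_const: "mono_val n (c, \<lambda>_. 0) x = c"
  unfolding mono_val_def by simp

definition Qp where "Qp n j = poly_fun n {(0, ex 0 2), (0, ex (2*j+1) 0)}"
definition Pp where "Pp n j = poly_fun n {(0, ex 0 2), (0, ex (2*j+1) 0), (0, ex (j+1) 1)}"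
definition cp where "cp n c = poly_fun n {(c, \<lambda>_. 0)}"

lemma Qp_val: "2 \<le> n \<Longrightarrow> x \<in> Tpts n \<Longrightarrow>
   Qp n j x = max (ereal 2 * x 1) (ereal (real (2*j+1)) * x 0)"
  unfolding Qp_def poly_fun_def by (simp add: mv_ex sup_max)

lemma Pp_val: "2 \<le> n \<Longrightarrow> x \<in> Tpts n \<Longrightarrow>
   Pp n j x = max (ereal 2 * x 1) (max (ereal (real (2*j+1)) * x 0) (ereal (real (j+1)) * x 0 + x 1))"
  unfolding Pp_def poly_fun_def by (simp add: mv_ex sup_max)

lemma cp_val: "x \<in> Tpts n \<Longrightarrow> cp n c x = c"
  unfolding cp_def poly_fun_def by (simp add: mv_const)

lemma Qp_T: "Qp n j \<in> TPoly n" unfolding Qp_def TPoly_def by force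
lemma Pp_T: "Pp n j \<in> TPoly n" unfolding Pp_def TPoly_def by force
lemma cp_T: "c \<noteq> \<infinity> \<Longrightarrow> cp n c \<in> TPoly n" unfolding cp_def TPoly_def by force

lemma zeropt: "(\<lambda>_. 0) \<in> Tpts n" by (simp add: Tpts_def)

lemma Qp_nz: "2 \<le> n \<Longrightarrow> Qp n j \<noteq> (\<lambda>_. -\<infinity>)"
  using Qp_val[OF _ zeropt, of n j] by (auto dest: fun_cong[of _ _ "\<lambda>_. 0"])

lemma cp0_nz: "cp n 0 \<noteq> (\<lambda>_. -\<infinity>)"
  using cp_val[OF zeropt, of n 0] by (auto dest: fun_cong[of _ _ "\<lambda>_. 0"])

lemma F_fp: "2 \<le> n \<Longrightarrow> (Pp n j, Qp n j) \<in> frac_pairs n"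
  using Qp_T Pp_T Qp_nz by (simp add: fp_iff)

lemma C_fp: "c \<noteq> \<infinity> \<Longrightarrow> (cp n c, cp n 0) \<in> frac_pairs n"
  using cp_T cp0_nz by (simp add: fp_iff)

lemma frac_const_eq: "frac_const n c = frac_class n (cp n c, cp n 0)"
  unfolding frac_const_def cp_def by simp

lemma not_both:
  fixes a b :: real
  assumes "i < j"
  shows "\<not> ((real i + 1) * a + b > max (2*b) ((2 * real i + 1) * a) \<and>
             (real j + 1) * a + b > max (2*b) ((2 * real j + 1) * a))"
proof
  assume h: "(real i + 1) * a + b > max (2*b) ((2 * real i + 1) * a) \<and>
             (real j + 1) * a + b > max (2*b) ((2 * real j + 1) * a)"
  then have h1: "b < (real i + 1) * a" "b > real i * a" "b > real j * a"
    by (auto simp: algebra_simps)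
  then have "a > 0" by (simp add: algebra_simps)
  moreover have "real i + 1 \<le> real j" using assms by simp
  ultimately have "(real i + 1) * a \<le> real j * a" by (intro mult_right_mono) auto
  then show False using h1 by simp
qed

lemma max_real_key:
  fixes qi ri qj rj :: real
  assumes "\<not> (ri > qi \<and> rj > qj)"
  shows "max qi ri + max qj rj = max (max qi ri + qj) (max qj rj + qi)"
  using assms by (auto simp: max_def)

lemma key_ereal:
  assumes n: "2 \<le> n" and x: "x \<in> Tpts n" and ij: "i \<noteq> j"
  shows "Pp n i x + Pp n j x = max (Pp n i x + Qp n j x) (Pp n j x + Qp n i x)"
proof -
  have X: "x 0 \<noteq> \<infinity>" and Y: "x 1 \<noteq> \<infinity>" using x n by (auto simp: Tpts_def)
  show ?thesis
  proof (cases "x 0 = -\<infinity> \<or> x 1 = -\<infinity>")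
    case True
    have R: "ereal (real (k+1)) * x 0 + x 1 = -\<infinity>" for k
      using True X Y by (cases "x 0"; cases "x 1") auto
    have "Pp n k x = Qp n k x" for k
      by (simp only: Pp_val[OF n x] Qp_val[OF n x] R) simp
    then show ?thesis by (simp add: ac_simps)
  next
    case False
    then obtain a b where ab: "x 0 = ereal a" "x 1 = ereal b" using X Y
      by (cases "x 0"; cases "x 1") auto
    have Pk: "Pp n k x = ereal (max (max (2*b) ((2 * real k + 1) * a)) ((real k + 1) * a + b))" for k
      using Pp_val[OF n x, of k] ab by (simp add: ac_simps)
    have Qk: "Qp n k x = ereal (max (2*b) ((2 * real k + 1) * a))" for k
      using Qp_val[OF n x, of k] ab by (simp add: ac_simps)
    have nb: "\<not> ((real i + 1) * a + b > max (2*b) ((2 * real i + 1) * a) \<and>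
             (real j + 1) * a + b > max (2*b) ((2 * real j + 1) * a))"
      using ij not_both[where i=i and j=j and a=a and b=b] not_both[where i=j and j=i and a=a and b=b] by (cases "i < j") auto
    have mx: "max (ereal u) (ereal v) = ereal (max u v)" for u v by (simp add: max_def)
    show ?thesis unfolding Pk Qk plus_ereal.simps(1) mx
      using max_real_key[OF nb] by (simp only:)
  qed
qed

definition Fj where "Fj n j = frac_class n (Pp n j, Qp n j)"

lemma Fj_TRat: "2 \<le> n \<Longrightarrow> Fj n j \<in> TRat n"
  unfolding Fj_def using F_fp class_in_TRat by blast

lemma disjoint:
  assumes n: "2 \<le> n" and ij: "i \<noteq> j"
  shows "frac_mul n (Fj n i) (Fj n j) = frac_add n (Fj n i) (Fj n j)"
proof -
  have fi: "(Pp n i, Qp n i) \<in> frac_pairs n" and fj: "(Pp n j, Qp n j) \<in> frac_pairs n"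
    using F_fp[OF n] by auto
  have "frac_class n (pmul (Pp n i, Qp n i) (Pp n j, Qp n j)) = frac_class n (padd (Pp n i, Qp n i) (Pp n j, Qp n j))"
  proof (subst class_eq_iff)
    show "pmul (Pp n i, Qp n i) (Pp n j, Qp n j) \<in> frac_pairs n" using pmul_fp[OF fi fj] .
    show "padd (Pp n i, Qp n i) (Pp n j, Qp n j) \<in> frac_pairs n" using padd_fp[OF fi fj] .
    show "ftimes (fst (pmul (Pp n i, Qp n i) (Pp n j, Qp n j))) (snd (padd (Pp n i, Qp n i) (Pp n j, Qp n j))) =
          ftimes (fst (padd (Pp n i, Qp n i) (Pp n j, Qp n j))) (snd (pmul (Pp n i, Qp n i) (Pp n j, Qp n j)))"
    proof
      fix x
      show "ftimes (fst (pmul (Pp n i, Qp n i) (Pp n j, Qp n j))) (snd (padd (Pp n i, Qp n i) (Pp n j, Qp n j))) x =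
            ftimes (fst (padd (Pp n i, Qp n i) (Pp n j, Qp n j))) (snd (pmul (Pp n i, Qp n i) (Pp n j, Qp n j))) x"
      proof (cases "x \<in> Tpts n")
        case True
        then show ?thesis using key_ereal[OF n True ij]
          by (simp add: pmul_def padd_def ftimes_def fplus_def)
      next
        case False
        then show ?thesis using TPoly_off[OF Pp_T False] TPoly_off[OF Qp_T False]
          by (simp add: pmul_def padd_def ftimes_def fplus_def)
      qed
    qed
  qed
  then show ?thesis unfolding Fj_def using frac_mul_class[OF fi fj] frac_add_class[OF fi fj] by simp
qed

lemma unbounded:
  assumes n: "2 \<le> n" and c: "c \<noteq> \<infinity>"
  shows "frac_add n (Fj n j) (frac_const n c) \<noteq> frac_const n c"
proof
  assume h: "frac_add n (Fj n j) (frac_const n c) = frac_const n c"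
  have fj: "(Pp n j, Qp n j) \<in> frac_pairs n" using F_fp[OF n] .
  have fc: "(cp n c, cp n 0) \<in> frac_pairs n" using C_fp[OF c] .
  have "frac_class n (padd (Pp n j, Qp n j) (cp n c, cp n 0)) = frac_class n (cp n c, cp n 0)"
    using h frac_add_class[OF fj fc] unfolding Fj_def frac_const_eq by simp
  then have eq: "ftimes (fst (padd (Pp n j, Qp n j) (cp n c, cp n 0))) (cp n 0)
      = ftimes (cp n c) (snd (padd (Pp n j, Qp n j) (cp n c, cp n 0)))"
    using class_eq_iff[OF padd_fp[OF fj fc] fc] by simp
  define s :: real where "s = (case c of ereal r \<Rightarrow> \<bar>r\<bar> + 1 | _ \<Rightarrow> 1)"
  have s0: "s > 0" unfolding s_def by (cases c) auto
  define z :: "nat \<Rightarrow> ereal" where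
    "z = (\<lambda>i. if i = 0 then ereal (2 * s) else if i = 1 then ereal ((2 * real j + 1) * s) else 0)"
  have zT: "z \<in> Tpts n" using n unfolding z_def Tpts_def by auto
  have Q: "Qp n j z = ereal ((4 * real j + 2) * s)"
    using Qp_val[OF n zT, of j] unfolding z_def by (simp add: algebra_simps)
  have z0: "z 0 = ereal (2 * s)" and z1: "z 1 = ereal ((2 * real j + 1) * s)" unfolding z_def by auto
  have t1: "ereal 2 * z 1 = ereal ((4 * real j + 2) * s)" unfolding z1 by (simp add: algebra_simps)
  have t2: "ereal (real (2*j+1)) * z 0 = ereal ((4 * real j + 2) * s)" unfolding z0 by (simp add: algebra_simps)
  have t3: "ereal (real (j+1)) * z 0 + z 1 = ereal ((4 * real j + 3) * s)" unfolding z0 z1 by (simp add: algebra_simps)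
  have lt: "(4 * real j + 2) * s \<le> (4 * real j + 3) * s" using s0 by (intro mult_right_mono) auto
  have P: "Pp n j z = ereal ((4 * real j + 3) * s)"
    using lt by (simp only: Pp_val[OF n zT] t1 t2 t3) (simp add: max_def)
  have e: "max (Pp n j z) (c + Qp n j z) = c + Qp n j z"
    using fun_cong[OF eq, of z] cp_val[OF zT]
    by (simp add: padd_def ftimes_def fplus_def ac_simps)
  show False
  proof (cases c)
    case (real r)
    have "r < s" unfolding s_def real by simp
    then have "r + (4 * real j + 2) * s < (4 * real j + 3) * s" by (simp add: algebra_simps)
    then show False using e P Q real by (simp add: max_def split: if_splits)
  next
    case MInf then show False using e P Q by simp
  qed (use c in simp)
qed

lemma cover:
  fixes a :: "nat \<Rightarrow> real"
  assumes "\<forall>i<k. a i < a (Suc i)" "a 0 \<le> t" "t \<le> a k" "0 < k"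
  shows "\<exists>i<k. a i \<le> t \<and> t \<le> a (Suc i)"
  using assms
proof (induction k)
  case 0 then show ?case by simp
next
  case (Suc k)
  show ?case
  proof (cases "t \<le> a k")
    case True
    show ?thesis
    proof (cases "k = 0")
      case True then show ?thesis using Suc.prems by auto
    next
      case False
      then obtain i where "i < k" "a i \<le> t \<and> t \<le> a (Suc i)" using Suc True by auto
      then show ?thesis using less_SucI by blast
    qed
  next
    case False then show ?thesis using Suc.prems by (intro exI[of _ k]) (auto simp: not_le less_imp_le)
  qed
qed

lemma piece_bound:
  fixes g :: "real \<Rightarrow> ereal" and m :: "nat \<Rightarrow> int"
  assumes pw: "\<forall>i<k. \<forall>t. a i \<le> t \<and> t \<le> a (Suc i) \<longrightarrow> g t = ereal (real_of_int (m i) * t + b i)"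
    and inc: "\<forall>i<k. a i < a (Suc i)" and a0: "a 0 = 0" and t: "0 \<le> t" "t \<le> a k" and k: "0 < k"
  shows "g t \<le> ereal (\<Sum>i<k. \<bar>real_of_int (m i)\<bar> * \<bar>a k\<bar> + \<bar>b i\<bar>)"
proof -
  obtain i where i: "i < k" "a i \<le> t" "t \<le> a (Suc i)" using cover[OF inc _ t(2) k] a0 t by auto
  have "real_of_int (m i) * t + b i \<le> \<bar>real_of_int (m i)\<bar> * \<bar>a k\<bar> + \<bar>b i\<bar>"
  proof -
    have "real_of_int (m i) * t \<le> \<bar>real_of_int (m i) * t\<bar>" by simp
    also have "\<dots> = \<bar>real_of_int (m i)\<bar> * \<bar>t\<bar>" by (simp add: abs_mult)
    also have "\<dots> \<le> \<bar>real_of_int (m i)\<bar> * \<bar>a k\<bar>" using t by (intro mult_left_mono) auto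
    finally show ?thesis by simp
  qed
  also have "\<dots> \<le> (\<Sum>i<k. \<bar>real_of_int (m i)\<bar> * \<bar>a k\<bar> + \<bar>b i\<bar>)"
    using i by (intro member_le_sum) auto
  finally show ?thesis using pw i by simp
qed

lemma edge_bound:
  assumes pa: "piecewise_affine_int (len e) (edge_fun src tgt len F e)"
    and lpos: "0 < len e"
    and H: "len e = \<infinity> \<longrightarrow> (\<forall>T>0. \<exists>t\<ge>T. F (Inr (e, t)) \<le> 0)"
  shows "\<exists>B. \<forall>t. 0 < t \<and> ereal t < len e \<longrightarrow> F (Inr (e, t)) \<le> ereal B"
proof -
  let ?g = "edge_fun src tgt len F e"
  have gF: "?g t = F (Inr (e, t))" if "0 < t" "ereal t < len e" for t
    using that by (auto simp: edge_fun_def)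
  show ?thesis
  proof (cases "len e = \<infinity>")
    case False
    then obtain k a m b where kamb: "a 0 = 0" "ereal (a k) = len e" "\<forall>i<k. a i < a (Suc i)"
      "\<forall>i<k. \<forall>t. a i \<le> t \<and> t \<le> a (Suc i) \<longrightarrow> ?g t = ereal (real_of_int (m i) * t + b i)"
      using pa unfolding piecewise_affine_int_def by blast
    show ?thesis
    proof (intro exI allI impI)
      fix t assume t: "0 < t \<and> ereal t < len e"
      then have "ereal t < ereal (a k)" using kamb(2) by simp
      then have tk: "t < a k" by simp
      have "0 < k" using tk t kamb(1) by (cases k) auto
      then have "?g t \<le> ereal (\<Sum>i<k. \<bar>real_of_int (m i)\<bar> * \<bar>a k\<bar> + \<bar>b i\<bar>)"
        using piece_bound[OF kamb(4,3,1)] t tk by auto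
      then show "F (Inr (e, t)) \<le> ereal (\<Sum>i<k. \<bar>real_of_int (m i)\<bar> * \<bar>a k\<bar> + \<bar>b i\<bar>)"
        using gF t by simp
    qed
  next
    case True
    then obtain k a m b where kamb: "a 0 = 0" "\<forall>i<k. a i < a (Suc i)"
      "\<forall>i<k. \<forall>t. a i \<le> t \<and> t \<le> a (Suc i) \<longrightarrow> ?g t = ereal (real_of_int (m i) * t + b i)"
      "\<forall>t. a k \<le> t \<longrightarrow> ?g t = ereal (real_of_int (m k) * t + b k)"
      using pa unfolding piecewise_affine_int_def by blast
    have ak0: "0 \<le> a k"
    proof (cases k)
      case (Suc k')
      have "\<forall>j\<le>k. 0 \<le> a j"
      proof (intro allI impI)
        fix j assume "j \<le> k" then show "0 \<le> a j"
        proof (induction j)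
          case 0 then show ?case using kamb(1) by simp
        next
          case (Suc j)
          then have jk: "j < k" "0 \<le> a j" by auto
          moreover have "a j < a (Suc j)" using kamb(2) jk(1) by blast
          ultimately show ?case by linarith
        qed
      qed
      then show ?thesis by simp
    qed (simp add: kamb(1))
    have mk: "m k \<le> 0"
    proof (rule ccontr)
      assume "\<not> m k \<le> 0"
      then have mk1: "real_of_int (m k) \<ge> 1" by simp
      define T where "T = max 1 (max (a k) (\<bar>b k\<bar> + 1))"
      have T0: "T > 0" unfolding T_def by simp
      obtain t where t: "t \<ge> T" "F (Inr (e, t)) \<le> 0" using H True T0 by blast
      have tpos: "0 < t" "a k \<le> t" "\<bar>b k\<bar> + 1 \<le> t" using t(1) unfolding T_def by auto
      have "real_of_int (m k) * t \<ge> 1 * t" using mk1 tpos by (intro mult_right_mono) auto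
      then have "real_of_int (m k) * t + b k > 0" using tpos by linarith
      moreover have "F (Inr (e, t)) = ereal (real_of_int (m k) * t + b k)"
        using gF[of t] kamb(4) tpos True by simp
      ultimately show False using t(2) by simp
    qed
    define B where "B = (\<Sum>i<k. \<bar>real_of_int (m i)\<bar> * \<bar>a k\<bar> + \<bar>b i\<bar>) + \<bar>b k\<bar>"
    show ?thesis
    proof (intro exI allI impI)
      fix t assume t: "0 < t \<and> ereal t < len e"
      show "F (Inr (e, t)) \<le> ereal B"
      proof (cases "t \<le> a k")
        case True
        have "0 < k" using True t kamb(1) by (cases k) auto
        then have "?g t \<le> ereal (\<Sum>i<k. \<bar>real_of_int (m i)\<bar> * \<bar>a k\<bar> + \<bar>b i\<bar>)"
          using piece_bound[OF kamb(3,2,1)] t True by auto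
        also have "\<dots> \<le> ereal B" unfolding B_def by simp
        finally show ?thesis using gF t by simp
      next
        case False
        have "real_of_int (m k) * t \<le> 0" using mk t by (simp add: mult_nonpos_nonneg)
        then have "real_of_int (m k) * t + b k \<le> B"
          unfolding B_def by (smt (verit) sum_nonneg abs_ge_zero mult_nonneg_nonneg)
        moreover have "?g t = ereal (real_of_int (m k) * t + b k)" using kamb(4) False by simp
        moreover have "?g t = F (Inr (e, t))" using gF t by blast
        ultimately show ?thesis by simp
      qed
    qed
  qed
qed

lemma RatG_ninf: "F \<in> RatG V E src tgt len \<Longrightarrow> p \<in> curve_pts V E tgt len \<Longrightarrow> F p \<noteq> \<infinity>"
  unfolding RatG_def by auto

lemma bounded:
  assumes F: "F \<in> RatG V E src tgt len" and fin: "finite V" "finite E"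
    and lp: "\<forall>e\<in>E. 0 < len e"
    and H: "\<forall>e\<in>E. len e = \<infinity> \<longrightarrow> (\<forall>T>0. \<exists>t\<ge>T. F (Inr (e, t)) \<le> 0)"
  shows "\<exists>c. \<forall>p\<in>curve_pts V E tgt len. F p \<le> ereal c"
proof -
  have F': "(\<forall>p\<in>curve_pts V E tgt len. F p = -\<infinity>) \<or>
          ((\<forall>p\<in>curve_pts V E tgt len. F p \<noteq> \<infinity> \<and> F p \<noteq> -\<infinity>) \<and>
           (\<forall>e\<in>E. piecewise_affine_int (len e) (edge_fun src tgt len F e)))"
    using F unfolding RatG_def by auto
  then show ?thesis
  proof
    assume "\<forall>p\<in>curve_pts V E tgt len. F p = -\<infinity>"
    then show ?thesis by auto
  next
    assume h: "(\<forall>p\<in>curve_pts V E tgt len. F p \<noteq> \<infinity> \<and> F p \<noteq> -\<infinity>) \<and>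
           (\<forall>e\<in>E. piecewise_affine_int (len e) (edge_fun src tgt len F e))"
    have "\<forall>e\<in>E. \<exists>B. \<forall>t. 0 < t \<and> ereal t < len e \<longrightarrow> F (Inr (e, t)) \<le> ereal B"
    proof
      fix e assume e: "e \<in> E"
      show "\<exists>B. \<forall>t. 0 < t \<and> ereal t < len e \<longrightarrow> F (Inr (e, t)) \<le> ereal B"
      proof (rule edge_bound)
        show "piecewise_affine_int (len e) (edge_fun src tgt len F e)" using h e by blast
        show "0 < len e" using lp e by blast
        show "len e = \<infinity> \<longrightarrow> (\<forall>T>0. \<exists>t\<ge>T. F (Inr (e, t)) \<le> 0)" using H e by blast
      qed
    qed
    from bchoice[OF this] obtain B where B: "\<forall>e\<in>E. \<forall>t. 0 < t \<and> ereal t < len e \<longrightarrow> F (Inr (e, t)) \<le> ereal (B e)"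
      by blast
    define c where "c = (\<Sum>v\<in>V. \<bar>real_of_ereal (F (Inl v))\<bar>) + (\<Sum>e\<in>E. \<bar>B e\<bar>)"
    have s1: "0 \<le> (\<Sum>v\<in>V. \<bar>real_of_ereal (F (Inl v))\<bar>)" "0 \<le> (\<Sum>e\<in>E. \<bar>B e\<bar>)"
      by (rule sum_nonneg, rule abs_ge_zero)+
    show ?thesis
    proof (intro exI ballI)
      fix p assume p: "p \<in> curve_pts V E tgt len"
      show "F p \<le> ereal c"
      proof (cases p)
        case (Inl v)
        then have v: "v \<in> V" using p by (auto simp: curve_pts_def)
        have fin1: "F p \<noteq> \<infinity>" "F p \<noteq> -\<infinity>" using h p by auto
        have "real_of_ereal (F (Inl v)) \<le> \<bar>real_of_ereal (F (Inl v))\<bar>" by (rule abs_ge_self)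
        also have "\<dots> \<le> (\<Sum>v\<in>V. \<bar>real_of_ereal (F (Inl v))\<bar>)"
          by (rule member_le_sum[OF v _ fin(1)]) (rule abs_ge_zero)
        also have "\<dots> \<le> c" unfolding c_def using s1 by simp
        finally show ?thesis using fin1 Inl by (cases "F p") auto
      next
        case (Inr et)
        then obtain e t where et: "p = Inr (e, t)" "e \<in> E" "0 < t" "ereal t < len e"
          using p by (auto simp: curve_pts_def)
        have "F p \<le> ereal (B e)" using B et by auto
        also have "B e \<le> \<bar>B e\<bar>" by simp
        also have "\<bar>B e\<bar> \<le> (\<Sum>e\<in>E. \<bar>B e\<bar>)" using et fin by (intro member_le_sum) auto
        also have "\<dots> \<le> c" unfolding c_def using s1 by simp
        finally show ?thesis by simp
      qed
    qed
  qed
qed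

lemma leaf:
  assumes F: "F \<in> RatG V E src tgt len" and fin: "finite V" "finite E"
    and lp: "\<forall>e\<in>E. 0 < len e"
    and U: "\<forall>c. c \<noteq> \<infinity> \<longrightarrow> fplus F (rat_const V E tgt len c) \<noteq> rat_const V E tgt len c"
  shows "\<exists>e\<in>E. len e = \<infinity> \<and> (\<exists>T>0. \<forall>t\<ge>T. F (Inr (e, t)) > 0)"
proof (rule ccontr)
  assume nt: "\<not> ?thesis"
  have H: "\<forall>e\<in>E. len e = \<infinity> \<longrightarrow> (\<forall>T>0. \<exists>t\<ge>T. F (Inr (e, t)) \<le> 0)"
  proof (intro ballI impI allI)
    fix e T assume e: "e \<in> E" "len e = \<infinity>" "(0::real) < T"
    show "\<exists>t\<ge>T. F (Inr (e, t)) \<le> 0"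
    proof (rule ccontr)
      assume "\<not> (\<exists>t\<ge>T. F (Inr (e, t)) \<le> 0)"
      then have "\<forall>t\<ge>T. F (Inr (e, t)) > 0" by (meson not_le)
      then show False using nt e by blast
    qed
  qed
  obtain c where c: "\<forall>p\<in>curve_pts V E tgt len. F p \<le> ereal c"
    using bounded[OF F fin lp H] by blast
  have "fplus F (rat_const V E tgt len (ereal c)) = rat_const V E tgt len (ereal c)"
  proof
    fix p show "fplus F (rat_const V E tgt len (ereal c)) p = rat_const V E tgt len (ereal c) p"
    proof (cases "p \<in> curve_pts V E tgt len")
      case True then show ?thesis using c by (simp add: fplus_def rat_const_def max_def)
    next
      case False
      then have "F p = -\<infinity>" using F unfolding RatG_def by auto
      then show ?thesis using False by (simp add: fplus_def rat_const_def)
    qed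
  qed
  then show False using U by auto
qed

theorem corollary3p13:
  fixes n :: nat
    and V :: "'v set" and E :: "'e set"
    and src tgt :: "'e \<Rightarrow> 'v" and len :: "'e \<Rightarrow> ereal"
  assumes "2 \<le> n"
    and "tropical_curve V E src tgt len"
  shows "\<not> (\<exists>\<phi>. talg_iso (TRat n) (frac_add n) (frac_mul n) (frac_const n)
                    (RatG V E src tgt len) fplus ftimes (rat_const V E tgt len) \<phi>)"
proof
  assume "\<exists>\<phi>. talg_iso (TRat n) (frac_add n) (frac_mul n) (frac_const n)
                    (RatG V E src tgt len) fplus ftimes (rat_const V E tgt len) \<phi>"
  then obtain \<phi> where bij: "bij_betw \<phi> (TRat n) (RatG V E src tgt len)"
    and add: "\<forall>x\<in>TRat n. \<forall>y\<in>TRat n. \<phi> (frac_add n x y) = fplus (\<phi> x) (\<phi> y)"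
    and mul: "\<forall>x\<in>TRat n. \<forall>y\<in>TRat n. \<phi> (frac_mul n x y) = ftimes (\<phi> x) (\<phi> y)"
    and cst: "\<forall>c. c \<noteq> \<infinity> \<longrightarrow> \<phi> (frac_const n c) = rat_const V E tgt len c"
    unfolding talg_iso_def by blast
  have n: "2 \<le> n" by (rule assms(1))
  have fin: "finite V" "finite E" and lp: "\<forall>e\<in>E. 0 < len e"
    using assms(2) unfolding tropical_curve_def by auto
  have inj: "inj_on \<phi> (TRat n)" using bij by (rule bij_betw_imp_inj_on)
  have GR: "\<phi> (Fj n j) \<in> RatG V E src tgt len" for j
    using bij Fj_TRat[OF n] by (auto dest: bij_betw_imp_surj_on)
  have unb: "\<forall>c. c \<noteq> \<infinity> \<longrightarrow> fplus (\<phi> (Fj n j)) (rat_const V E tgt len c) \<noteq> rat_const V E tgt len c" for j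
  proof (intro allI impI notI)
    fix c :: ereal assume c: "c \<noteq> \<infinity>"
      and eq: "fplus (\<phi> (Fj n j)) (rat_const V E tgt len c) = rat_const V E tgt len c"
    have cT: "frac_const n c \<in> TRat n"
      unfolding frac_const_eq using class_in_TRat[OF C_fp[OF c]] .
    have aT: "frac_add n (Fj n j) (frac_const n c) \<in> TRat n"
      unfolding frac_const_eq Fj_def
      using frac_add_class[OF F_fp[OF n] C_fp[OF c]] class_in_TRat[OF padd_fp[OF F_fp[OF n] C_fp[OF c]]]
      by simp
    have "\<phi> (frac_add n (Fj n j) (frac_const n c)) = \<phi> (frac_const n c)"
      using add Fj_TRat[OF n] cT eq cst c by simp
    then have "frac_add n (Fj n j) (frac_const n c) = frac_const n c"
      using inj_onD[OF inj _ aT cT] by blast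
    then show False using unbounded[OF n c] by blast
  qed
  have "\<forall>j. \<exists>e\<in>E. len e = \<infinity> \<and> (\<exists>T>0. \<forall>t\<ge>T. \<phi> (Fj n j) (Inr (e, t)) > 0)"
    using leaf[OF GR fin lp unb] by blast
  then obtain ee TT where eT: "\<And>j. ee j \<in> E" "\<And>j. len (ee j) = \<infinity>" "\<And>j. TT j > 0"
      "\<And>j t. t \<ge> TT j \<Longrightarrow> \<phi> (Fj n j) (Inr (ee j, t)) > 0"
    by metis
  have disj: "ftimes (\<phi> (Fj n i)) (\<phi> (Fj n j)) = fplus (\<phi> (Fj n i)) (\<phi> (Fj n j))" if "i \<noteq> j" for i j
    using disjoint[OF n that] add mul Fj_TRat[OF n] by metis
  have "inj_on ee {..card E}"
  proof (rule inj_onI, rule ccontr)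
    fix i j assume ij: "i \<in> {..card E}" "j \<in> {..card E}" "ee i = ee j" "i \<noteq> j"
    define t where "t = max (TT i) (TT j)"
    have p: "Inr (ee i, t) \<in> curve_pts V E tgt len"
      using eT(1,2,3)[of i] unfolding curve_pts_def t_def by auto
    have a: "\<phi> (Fj n i) (Inr (ee i, t)) > 0" "\<phi> (Fj n i) (Inr (ee i, t)) \<noteq> \<infinity>"
      using eT(4)[of i t] RatG_ninf[OF GR p] unfolding t_def by auto
    have b: "\<phi> (Fj n j) (Inr (ee i, t)) > 0" "\<phi> (Fj n j) (Inr (ee i, t)) \<noteq> \<infinity>"
      using eT(4)[of j t] RatG_ninf[OF GR p] ij(3) unfolding t_def by auto
    have "\<phi> (Fj n i) (Inr (ee i, t)) + \<phi> (Fj n j) (Inr (ee i, t))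
        = max (\<phi> (Fj n i) (Inr (ee i, t))) (\<phi> (Fj n j) (Inr (ee i, t)))"
      using fun_cong[OF disj[OF ij(4)], of "Inr (ee i, t)"] by (simp add: ftimes_def fplus_def)
    then show False using a b
      by (cases "\<phi> (Fj n i) (Inr (ee i, t))"; cases "\<phi> (Fj n j) (Inr (ee i, t))") (auto simp: max_def split: if_splits)
  qed
  then have "card {..card E} \<le> card E"
    using eT(1) fin(2) by (intro card_inj_on_le) auto
  then show False by simp
qed

end
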